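(* Suppose $\overline{\mathcal{G}}$ is compact with totally disconnected boundary $\partial\overline{\mathcal{G}}$. Let $E$ and $E^c=\partial\overline{\mathcal{G}}\setminus E$ be nonempty clopen subsets of $\partial\overline{\mathcal{G}}$. Then there is a function $\phi\in\mathcal{A}$ with $\phi(x)=1$ for all $x\in E$ and $\phi(x)=0$ for all $x\in E^c$.
   Context: $\mathcal{G}$ is a connected, locally finite metric graph with countable vertex set and countable edge set. Each edge has a positive length and is identified with an interval. $\mathcal{G}$ carries the geodesic distance, and $\overline{\mathcal{G}}$ is its metric completion. A designated set of vertices, containing all vertices of degree $1$, forms the boundary vertices. $\mathcal{G}_{int}$ is $\mathcal{G}$ minus the boundary vertices, and $\partial\overline{\mathcal{G}}=\overline{\mathcal{G}}\setminus\mathcal{G}_{int}$. Clopen means open and closed in $\partial\overline{\mathcal{G}}$. $\mathcal{A}$ is the set of functions $\phi:\overline{\mathcal{G}}\to\mathbb{R}$ such that: - $\phi$ is continuous on $\overline{\mathcal{G}}$; - $\phi$ is infinitely differentiable on the open edges; - $\phi'=0$ outside some finite collection of edges; - $\phi'=0$ in an open neighborhood of each vertex of $\mathcal{G}$. *)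

theory Defs
  imports "HOL-Analysis.Analysis"
begin

text \<open>A metric graph: vertex set V, edge set Ed, each edge e has an initial vertex s e,
  a terminal vertex t e and a length len e > 0; the open edge e is identified with
  the interval (0, len e). Loops and multiple edges are allowed.\<close>

definition metric_graph ::
  "'v set \<Rightarrow> 'e set \<Rightarrow> ('e \<Rightarrow> 'v) \<Rightarrow> ('e \<Rightarrow> 'v) \<Rightarrow> ('e \<Rightarrow> real) \<Rightarrow> bool" where
  "metric_graph V Ed s t len \<longleftrightarrow>
     countable V \<and> countable Ed \<and>
     (\<forall>e\<in>Ed. s e \<in> V \<and> t e \<in> V \<and> len e > 0) \<and>
     (\<forall>v\<in>V. finite {e\<in>Ed. s e = v \<or> t e = v})"

inductive walk :: "'e set \<Rightarrow> ('e \<Rightarrow> 'v) \<Rightarrow> ('e \<Rightarrow> 'v) \<Rightarrow> 'v \<Rightarrow> 'e list \<Rightarrow> 'v \<Rightarrow> bool"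
  for Ed s t where
  walk_Nil: "walk Ed s t u [] u"
| walk_fwd: "e \<in> Ed \<Longrightarrow> s e = u \<Longrightarrow> walk Ed s t (t e) es w \<Longrightarrow> walk Ed s t u (e # es) w"
| walk_bwd: "e \<in> Ed \<Longrightarrow> t e = u \<Longrightarrow> walk Ed s t (s e) es w \<Longrightarrow> walk Ed s t u (e # es) w"

definition graph_connected :: "'v set \<Rightarrow> 'e set \<Rightarrow> ('e \<Rightarrow> 'v) \<Rightarrow> ('e \<Rightarrow> 'v) \<Rightarrow> bool" where
  "graph_connected V Ed s t \<longleftrightarrow> (\<forall>u\<in>V. \<forall>w\<in>V. \<exists>es. walk Ed s t u es w)"

text \<open>Degree of a vertex (a loop contributes 2).\<close>
definition degree :: "'e set \<Rightarrow> ('e \<Rightarrow> 'v) \<Rightarrow> ('e \<Rightarrow> 'v) \<Rightarrow> 'v \<Rightarrow> nat" where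
  "degree Ed s t v = card {e\<in>Ed. s e = v} + card {e\<in>Ed. t e = v}"

definition gpoints :: "'v set \<Rightarrow> 'e set \<Rightarrow> ('e \<Rightarrow> real) \<Rightarrow> ('v + 'e \<times> real) set" where
  "gpoints V Ed len = Inl ` V \<union> {Inr (e, x) | e x. e \<in> Ed \<and> 0 < x \<and> x < len e}"

definition vdist :: "'e set \<Rightarrow> ('e \<Rightarrow> 'v) \<Rightarrow> ('e \<Rightarrow> 'v) \<Rightarrow> ('e \<Rightarrow> real) \<Rightarrow> 'v \<Rightarrow> 'v \<Rightarrow> real" where
  "vdist Ed s t len u w = Inf {sum_list (map len es) | es. walk Ed s t u es w}"

text \<open>The vertices through which a point can be left, with the distance to them along its edge.\<close>
definition exits :: "('e \<Rightarrow> 'v) \<Rightarrow> ('e \<Rightarrow> 'v) \<Rightarrow> ('e \<Rightarrow> real) \<Rightarrow> 'v + 'e \<times> real \<Rightarrow> ('v \<times> real) set" where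
  "exits s t len p = (case p of Inl v \<Rightarrow> {(v, 0)}
                        | Inr (e, x) \<Rightarrow> {(s e, x), (t e, len e - x)})"

text \<open>Geodesic distance on the metric graph: a shortest path either stays inside one edge,
  or leaves the first point through an endpoint of its edge, runs along a walk, and enters
  the second point through an endpoint of its edge.\<close>
definition gdist :: "'e set \<Rightarrow> ('e \<Rightarrow> 'v) \<Rightarrow> ('e \<Rightarrow> 'v) \<Rightarrow> ('e \<Rightarrow> real) \<Rightarrow>
    'v + 'e \<times> real \<Rightarrow> 'v + 'e \<times> real \<Rightarrow> real" where
  "gdist Ed s t len p q =
     (let via = Inf {a + vdist Ed s t len u w + b | u a w b.
                       (u, a) \<in> exits s t len p \<and> (w, b) \<in> exits s t len q}
      in case (p, q) of
           (Inr (e, x), Inr (e', y)) \<Rightarrow> (if e = e' then min \<bar>x - y\<bar> via else via)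
         | _ \<Rightarrow> via)"

definition totally_disconnected :: "'a::topological_space set \<Rightarrow> bool" where
  "totally_disconnected S \<longleftrightarrow> (\<forall>C. C \<subseteq> S \<and> connected C \<longrightarrow> (\<exists>a. C \<subseteq> {a}))"

definition edge_fun :: "('x \<Rightarrow> real) \<Rightarrow> ('v + 'e \<times> real \<Rightarrow> 'x) \<Rightarrow> 'e \<Rightarrow> real \<Rightarrow> real" where
  "edge_fun \<phi> \<iota> e = (\<lambda>x. \<phi> (\<iota> (Inr (e, x))))"

definition class_A :: "'v set \<Rightarrow> 'e set \<Rightarrow> ('e \<Rightarrow> 'v) \<Rightarrow> ('e \<Rightarrow> 'v) \<Rightarrow> ('e \<Rightarrow> real) \<Rightarrow>
    ('v + 'e \<times> real \<Rightarrow> 'x::metric_space) \<Rightarrow> 'x set \<Rightarrow> ('x \<Rightarrow> real) \<Rightarrow> bool" where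
  "class_A V Ed s t len \<iota> Gbar \<phi> \<longleftrightarrow>
     continuous_on Gbar \<phi> \<and>
     (\<forall>e\<in>Ed. \<forall>k. \<forall>x\<in>{0<..<len e}. ((deriv ^^ k) (edge_fun \<phi> \<iota> e)) differentiable (at x)) \<and>
     (\<exists>F. finite F \<and> F \<subseteq> Ed \<and>
        (\<forall>e\<in>Ed - F. \<forall>x\<in>{0<..<len e}. deriv (edge_fun \<phi> \<iota> e) x = 0)) \<and>
     (\<forall>v\<in>V. \<exists>\<epsilon>>0. \<forall>e\<in>Ed. \<forall>x\<in>{0<..<len e}.
        gdist Ed s t len (Inl v) (Inr (e, x)) < \<epsilon> \<longrightarrow> deriv (edge_fun \<phi> \<iota> e) x = 0)"

end

theory Submission
  imports "HOL-Computational_Algebra.Polynomial" Defs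
begin


fun ck :: "nat \<Rightarrow> (real \<Rightarrow> real) \<Rightarrow> bool" where
  "ck 0 f = True"
| "ck (Suc k) f = (\<exists>f'. (\<forall>x. (f has_real_derivative f' x) (at x)) \<and> ck k f')"

lemma ck_mono: "ck (Suc k) f \<Longrightarrow> ck k f"
proof (induction k arbitrary: f)
  case 0 then show ?case by simp
next
  case (Suc k)
  then obtain f' where "\<forall>x. (f has_real_derivative f' x) (at x)" "ck (Suc k) f'" by auto
  with Suc.IH show ?case by auto
qed

lemma ck_const: "ck k (\<lambda>x. c)"
proof (induction k arbitrary: c)
  case 0 then show ?case by simp
next
  case (Suc k) then show ?case by (auto intro!: exI[of _ "\<lambda>x. 0"])
qed

lemma ck_add: "ck k f \<Longrightarrow> ck k g \<Longrightarrow> ck k (\<lambda>x. f x + g x)"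
proof (induction k arbitrary: f g)
  case 0 then show ?case by simp
next
  case (Suc k)
  then obtain f' g' where "\<forall>x. (f has_real_derivative f' x) (at x)" "ck k f'"
     "\<forall>x. (g has_real_derivative g' x) (at x)" "ck k g'" by auto
  then show ?case using Suc.IH
    by (auto intro!: exI[of _ "\<lambda>x. f' x + g' x"] derivative_eq_intros)
qed

lemma ck_mult: "ck k f \<Longrightarrow> ck k g \<Longrightarrow> ck k (\<lambda>x. f x * g x)"
proof (induction k arbitrary: f g)
  case 0 then show ?case by simp
next
  case (Suc k)
  then obtain f' g' where d: "\<forall>x. (f has_real_derivative f' x) (at x)" "ck k f'"
     "\<forall>x. (g has_real_derivative g' x) (at x)" "ck k g'" by auto
  have "ck k f" "ck k g" using Suc.prems ck_mono by auto
  then have "ck k (\<lambda>x. f' x * g x + f x * g' x)"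
    using Suc.IH d by (intro ck_add) auto
  then show ?case using d
    by (auto intro!: exI[of _ "\<lambda>x. f' x * g x + f x * g' x"] derivative_eq_intros)
qed

lemma ck_inverse: "ck k f \<Longrightarrow> (\<forall>x. f x > 0) \<Longrightarrow> ck k (\<lambda>x. inverse (f x))"
proof (induction k arbitrary: f)
  case 0 then show ?case by simp
next
  case (Suc k)
  then obtain f' where d: "\<forall>x. (f has_real_derivative f' x) (at x)" "ck k f'" by auto
  have "ck k f" using Suc.prems ck_mono by auto
  then have i: "ck k (\<lambda>x. inverse (f x))" using Suc by auto
  have "ck k (\<lambda>x. (-1) * f' x * (inverse (f x) * inverse (f x)))"
    using d i by (intro ck_mult ck_const) auto
  moreover have "((\<lambda>x. inverse (f x)) has_real_derivative (-1) * f' x * (inverse (f x) * inverse (f x))) (at x)" for x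
    using d Suc.prems(2)[rule_format, of x]
    by (auto intro!: derivative_eq_intros simp: power2_eq_square field_simps)
  ultimately show ?case by (intro ck.simps(2)[THEN iffD2] exI conjI) auto
qed

lemma ck_affine: "ck k f \<Longrightarrow> ck k (\<lambda>x. f (a * x + b))"
proof (induction k arbitrary: f)
  case 0 then show ?case by simp
next
  case (Suc k)
  then obtain f' where d: "\<forall>x. (f has_real_derivative f' x) (at x)" "ck k f'" by auto
  have "ck k (\<lambda>x. a * f' (a * x + b))" using Suc.IH d by (intro ck_mult ck_const) auto
  moreover have "((\<lambda>x. f (a * x + b)) has_real_derivative a * f' (a * x + b)) (at x)" for x
  proof -
    have "((\<lambda>x. a * x + b) has_real_derivative a) (at x)" by (auto intro!: derivative_eq_intros)
    from DERIV_chain2[OF d(1)[rule_format, of "a*x+b"] this] show ?thesis by (simp add: mult.commute)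
  qed
  ultimately show ?case by (intro ck.simps(2)[THEN iffD2] exI conjI) auto
qed

lemma ck_deriv_differentiable:
  "ck (Suc k) f \<Longrightarrow> ((deriv ^^ k) f) differentiable (at x)"
proof (induction k arbitrary: f)
  case 0 then show ?case by (auto simp: real_differentiable_def)
next
  case (Suc k)
  then obtain f' where d: "\<forall>x. (f has_real_derivative f' x) (at x)" "ck (Suc k) f'" by auto
  have "deriv f = f'" using d(1) by (auto intro!: ext DERIV_imp_deriv)
  then have "(deriv ^^ Suc k) f = (deriv ^^ k) f'" by (simp add: funpow_Suc_right del: funpow.simps)
  then show ?case using Suc.IH d by simp
qed

lemma poly_exp_lim: "((\<lambda>y. poly P y * exp (- y)) \<longlongrightarrow> (0::real)) at_top"
proof -
  have "((\<lambda>y. \<Sum>i\<le>Polynomial.degree P. coeff P i * (y ^ i / exp y)) \<longlongrightarrow> (\<Sum>i\<le>Polynomial.degree P. coeff P i * 0)) at_top"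
    by (intro tendsto_intros tendsto_power_div_exp_0)
  moreover have "(\<lambda>y. \<Sum>i\<le>Polynomial.degree P. coeff P i * (y ^ i / exp y)) = (\<lambda>y. poly P y * exp (- y))"
    by (auto simp: poly_altdef sum_divide_distrib exp_minus field_simps)
  ultimately show ?thesis by simp
qed

definition psi :: "real poly \<Rightarrow> real \<Rightarrow> real" where
  "psi P t = (if t > 0 then poly P (inverse t) * exp (- inverse t) else 0)"

definition psiQ :: "real poly \<Rightarrow> real poly" where
  "psiQ P = [:0,0,1:] * (P - pderiv P)"

lemma psi_deriv_pos:
  assumes "t > 0"
  shows "(psi P has_real_derivative psi (psiQ P) t) (at t)"
proof -
  have "((\<lambda>t. poly P (inverse t) * exp (- inverse t)) has_real_derivative
        (poly (pderiv P) (inverse t) * (- inverse (t^2))) * exp (- inverse t)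
         + poly P (inverse t) * (exp (- inverse t) * inverse (t^2))) (at t)"
    using assms
    by (auto intro!: derivative_eq_intros DERIV_chain2[of "poly P"] poly_DERIV
             simp: power2_eq_square field_simps)
  moreover have "(poly (pderiv P) (inverse t) * (- inverse (t^2))) * exp (- inverse t)
         + poly P (inverse t) * (exp (- inverse t) * inverse (t^2)) = psi (psiQ P) t"
    using assms by (simp add: psi_def psiQ_def algebra_simps power2_eq_square)
  ultimately have d: "((\<lambda>t. poly P (inverse t) * exp (- inverse t)) has_real_derivative psi (psiQ P) t) (at t)"
    by simp
  show ?thesis
    by (rule has_field_derivative_transform_within_open[OF d, of "{0<..}"]) (use assms in \<open>auto simp: psi_def\<close>)
qed

lemma psi_deriv_neg:
  assumes "t < 0"
  shows "(psi P has_real_derivative psi (psiQ P) t) (at t)"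
proof -
  have d: "((\<lambda>t. 0) has_real_derivative 0) (at t)" by simp
  have "(psi P has_real_derivative 0) (at t)"
    by (rule has_field_derivative_transform_within_open[OF d, of "{..<0}"]) (use assms in \<open>auto simp: psi_def\<close>)
  then show ?thesis using assms by (simp add: psi_def)
qed

lemma psi_deriv_0: "(psi P has_real_derivative psi (psiQ P) 0) (at 0)"
proof -
  have "((\<lambda>h. (psi P (0 + h) - psi P 0) / h) \<longlongrightarrow> 0) (at 0)"
  proof (rule filterlim_split_at_real)
    show "((\<lambda>h. (psi P (0 + h) - psi P 0) / h) \<longlongrightarrow> 0) (at_left 0)"
      by (rule tendsto_eventually) (auto simp: psi_def eventually_at_left_field intro: exI[of _ "-1"])
    have "((\<lambda>y. poly (pCons 0 P) y * exp (- y)) \<longlongrightarrow> (0::real)) at_top" by (rule poly_exp_lim)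
    moreover have "eventually (\<lambda>y. poly (pCons 0 P) y * exp (- y) = (psi P (0 + inverse y) - psi P 0) / inverse y) at_top"
      using eventually_gt_at_top[of 0] by eventually_elim (auto simp: psi_def field_simps)
    ultimately have "((\<lambda>y. (psi P (0 + inverse y) - psi P 0) / inverse y) \<longlongrightarrow> 0) at_top"
      by (rule Lim_transform_eventually)
    then show "((\<lambda>h. (psi P (0 + h) - psi P 0) / h) \<longlongrightarrow> 0) (at_right 0)"
      by (simp add: filterlim_at_right_to_top)
  qed
  then show ?thesis by (simp add: DERIV_def psi_def)
qed

lemma psi_deriv: "(psi P has_real_derivative psi (psiQ P) t) (at t)"
  using psi_deriv_pos psi_deriv_neg psi_deriv_0 by (metis linorder_neqE_linordered_idom)

lemma ck_psi: "ck k (psi P)"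
proof (induction k arbitrary: P)
  case 0 then show ?case by simp
next
  case (Suc k) then show ?case using psi_deriv by auto
qed

definition step :: "real \<Rightarrow> real" where
  "step t = psi 1 t * inverse (psi 1 t + psi 1 (1 - t))"

lemma psi1_pos: "t > 0 \<Longrightarrow> psi 1 t > 0" by (simp add: psi_def)
lemma psi1_zero: "t \<le> 0 \<Longrightarrow> psi 1 t = 0" by (simp add: psi_def)

lemma step_den_pos: "psi 1 t + psi 1 (1 - t) > 0"
  using psi1_pos[of t] psi1_pos[of "1-t"] psi1_zero[of t] psi1_zero[of "1-t"]
  by (cases "t > 0"; cases "1 - t > 0") auto

lemma ck_step: "ck k step"
proof -
  have a: "ck k (\<lambda>t. psi 1 ((-1) * t + 1))" by (rule ck_affine) (rule ck_psi)
  have "ck k (\<lambda>t. psi 1 t * inverse (psi 1 t + psi 1 ((-1) * t + 1)))"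
    using step_den_pos by (intro ck_mult ck_psi ck_inverse ck_add a) auto
  then show ?thesis by (simp add: step_def[abs_def])
qed

lemma step_le0: "t \<le> 0 \<Longrightarrow> step t = 0" by (simp add: step_def psi1_zero)
lemma step_ge1: "t \<ge> 1 \<Longrightarrow> step t = 1" using psi1_pos[of t] psi1_zero[of "1-t"] by (simp add: step_def)



lemma walk_edges: "walk Ed s t u es w \<Longrightarrow> set es \<subseteq> Ed"
  by (induction rule: walk.induct) auto

lemma walk_len_nonneg:
  fixes len :: "'e \<Rightarrow> real"
  shows "walk Ed s t u es w \<Longrightarrow> \<forall>e\<in>Ed. len e > 0 \<Longrightarrow> 0 \<le> sum_list (map len es)"
  by (induction rule: walk.induct) (auto intro: add_nonneg_nonneg less_imp_le)

lemma finite_image_Inf_le: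
  fixes f :: "'a \<Rightarrow> real"
  assumes "finite A" "a \<in> A" shows "Inf (f ` A) \<le> f a"
  using assms by (intro cInf_lower) auto

lemma finite_image_Inf_ge:
  fixes f :: "'a \<Rightarrow> real"
  assumes "A \<noteq> {}" "\<And>a. a \<in> A \<Longrightarrow> m \<le> f a" shows "m \<le> Inf (f ` A)"
  using assms by (intro cInf_greatest) auto

lemma finite_image_Inf_less:
  fixes f :: "'a \<Rightarrow> real"
  assumes "finite A" "A \<noteq> {}" "Inf (f ` A) < m" shows "\<exists>a\<in>A. f a < m"
  using assms by (subst (asm) cInf_less_iff) auto

definition via where
  "via Ed s t len p q = Inf {a + vdist Ed s t len u w + b | u a w b.
                       (u, a) \<in> exits s t len p \<and> (w, b) \<in> exits s t len q}"

lemma via_image: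
  "{a + vdist Ed s t len u w + b | u a w b. (u, a) \<in> exits s t len p \<and> (w, b) \<in> exits s t len q}
   = (\<lambda>((u,a),(w,b)). a + vdist Ed s t len u w + b) ` (exits s t len p \<times> exits s t len q)"
  by force

lemma exits_finite: "finite (exits s t len p)"
  by (auto simp: exits_def split: sum.splits prod.splits)

lemma exits_ne: "exits s t len p \<noteq> {}"
  by (auto simp: exits_def split: sum.splits prod.splits)

lemma via_le:
  "(u, a) \<in> exits s t len p \<Longrightarrow> (w, b) \<in> exits s t len q \<Longrightarrow>
   via Ed s t len p q \<le> a + vdist Ed s t len u w + b"
  unfolding via_def via_image
  by (rule order_trans[OF finite_image_Inf_le[of _ "((u,a),(w,b))"]]) (auto simp: exits_finite)

lemma via_ge:
  "(\<And>u a w b. (u, a) \<in> exits s t len p \<Longrightarrow> (w, b) \<in> exits s t len q \<Longrightarrow> m \<le> a + vdist Ed s t len u w + b)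
   \<Longrightarrow> m \<le> via Ed s t len p q"
  unfolding via_def via_image
  by (rule finite_image_Inf_ge) (auto simp: exits_ne)

lemma via_less:
  "via Ed s t len p q < m \<Longrightarrow>
   \<exists>u a w b. (u, a) \<in> exits s t len p \<and> (w, b) \<in> exits s t len q \<and> a + vdist Ed s t len u w + b < m"
  unfolding via_def via_image
  by (drule finite_image_Inf_less[rotated 2]) (auto simp: exits_finite exits_ne)

lemma gdist_via:
  "gdist Ed s t len p q = (case (p, q) of
           (Inr (e, x), Inr (e', y)) \<Rightarrow> (if e = e' then min \<bar>x - y\<bar> (via Ed s t len p q) else via Ed s t len p q)
         | _ \<Rightarrow> via Ed s t len p q)"
  unfolding gdist_def via_def Let_def by (simp split: sum.splits prod.splits)

lemma gdist_Inl: "gdist Ed s t len (Inl v) q = via Ed s t len (Inl v) q"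
  by (simp add: gdist_via)

lemma gdist_Inl2: "gdist Ed s t len p (Inl v) = via Ed s t len p (Inl v)"
  by (simp add: gdist_via split: sum.splits prod.splits)

lemma gdist_Inr_ne: "e \<noteq> e' \<Longrightarrow> gdist Ed s t len (Inr (e,x)) (Inr (e',y)) = via Ed s t len (Inr (e,x)) (Inr (e',y))"
  by (simp add: gdist_via)

lemma gdist_Inr_eq: "gdist Ed s t len (Inr (e,x)) (Inr (e,y)) = min \<bar>x - y\<bar> (via Ed s t len (Inr (e,x)) (Inr (e,y)))"
  by (simp add: gdist_via)

lemma exits_Inl[simp]: "exits s t len (Inl v) = {(v,0)}" by (simp add: exits_def)
lemma exits_Inr[simp]: "exits s t len (Inr (e,x)) = {(s e, x), (t e, len e - x)}" by (simp add: exits_def)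

lemma gdist_VV: "gdist Ed s t len (Inl v) (Inl w) = vdist Ed s t len v w"
proof -
  have "via Ed s t len (Inl v) (Inl w) \<le> vdist Ed s t len v w" using via_le[of v 0 s t len "Inl v" w 0 "Inl w" Ed] by simp
  moreover have "vdist Ed s t len v w \<le> via Ed s t len (Inl v) (Inl w)" by (rule via_ge) auto
  ultimately show ?thesis by (simp add: gdist_Inl)
qed

locale MG =
  fixes V :: "'v set" and Ed :: "'e set" and src trg :: "'e \<Rightarrow> 'v" and len :: "'e \<Rightarrow> real"
    and \<iota> :: "'v + 'e \<times> real \<Rightarrow> 'x::metric_space"
  assumes graph: "metric_graph V Ed src trg len"
    and conn: "graph_connected V Ed src trg"
    and isom: "\<forall>p\<in>gpoints V Ed len. \<forall>q\<in>gpoints V Ed len.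
                 dist (\<iota> p) (\<iota> q) = gdist Ed src trg len p q"
begin

abbreviation "G \<equiv> gpoints V Ed len"
abbreviation "vd \<equiv> vdist Ed src trg len"

lemma len_pos: "e \<in> Ed \<Longrightarrow> len e > 0" using graph by (auto simp: metric_graph_def)
lemma src_V: "e \<in> Ed \<Longrightarrow> src e \<in> V" using graph by (auto simp: metric_graph_def)
lemma trg_V: "e \<in> Ed \<Longrightarrow> trg e \<in> V" using graph by (auto simp: metric_graph_def)
lemma loc_fin: "v \<in> V \<Longrightarrow> finite {e\<in>Ed. src e = v \<or> trg e = v}" using graph by (auto simp: metric_graph_def)

lemma G_Inl[simp]: "Inl v \<in> G \<longleftrightarrow> v \<in> V" by (auto simp: gpoints_def)
lemma G_Inr[simp]: "Inr (e,x) \<in> G \<longleftrightarrow> e \<in> Ed \<and> 0 < x \<and> x < len e" by (auto simp: gpoints_def)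

lemma vdist_set_ne: "u \<in> V \<Longrightarrow> w \<in> V \<Longrightarrow> {sum_list (map len es) | es. walk Ed src trg u es w} \<noteq> {}"
  using conn by (auto simp: graph_connected_def)

lemma vdist_set_bdd: "bdd_below {sum_list (map len es) | es. walk Ed src trg u es w}"
  using walk_len_nonneg[of Ed src trg u _ w len] len_pos walk_edges
  by (intro bdd_belowI[of _ 0]) auto

lemma vdist_nonneg: "u \<in> V \<Longrightarrow> w \<in> V \<Longrightarrow> 0 \<le> vd u w"
  unfolding vdist_def using walk_len_nonneg[of Ed src trg u _ w len] len_pos vdist_set_ne[of u w]
  by (intro cInf_greatest) auto

lemma vdist_le_walk: "walk Ed src trg u es w \<Longrightarrow> vd u w \<le> sum_list (map len es)"
  unfolding vdist_def by (intro cInf_lower vdist_set_bdd) auto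

lemma vdist_refl: "u \<in> V \<Longrightarrow> vd u u = 0"
  using vdist_le_walk[of u "[]" u] walk_Nil[of Ed src trg u] vdist_nonneg[of u u] by simp

lemma vdist_edge: "e \<in> Ed \<Longrightarrow> vd (src e) (trg e) \<le> len e"
  using vdist_le_walk[OF walk_fwd[OF _ refl walk_Nil]] by fastforce

lemma vdist_lower:
  assumes "u \<in> V" "w \<in> V" "u \<noteq> w" "\<And>e. e \<in> Ed \<Longrightarrow> src e = u \<or> trg e = u \<Longrightarrow> r \<le> len e"
  shows "r \<le> vd u w"
  unfolding vdist_def
proof (rule cInf_greatest)
  show "{sum_list (map len es) | es. walk Ed src trg u es w} \<noteq> {}" by (rule vdist_set_ne) fact+
  fix d assume "d \<in> {sum_list (map len es) | es. walk Ed src trg u es w}"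
  then obtain es where es: "walk Ed src trg u es w" "d = sum_list (map len es)" by auto
  have "r \<le> sum_list (map len es)" using es(1)
  proof cases
    case walk_Nil then show ?thesis using assms by simp
  next
    case (walk_fwd e es')
    then show ?thesis using assms(4)[of e] walk_len_nonneg[of Ed src trg "trg e" es' w len] len_pos by auto
  next
    case (walk_bwd e es')
    then show ?thesis using assms(4)[of e] walk_len_nonneg[of Ed src trg "src e" es' w len] len_pos by auto
  qed
  then show "r \<le> d" using es(2) by simp
qed

lemma exits_V: "p \<in> G \<Longrightarrow> (u, a) \<in> exits src trg len p \<Longrightarrow> u \<in> V \<and> 0 \<le> a"
  by (cases p) (auto simp: src_V trg_V)

lemma via_ge_edge:
  assumes "e \<in> Ed" "0 < x" "x < len e" "q \<in> G"
  shows "min x (len e - x) \<le> via Ed src trg len (Inr (e,x)) q"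
proof (rule via_ge)
  fix u a w b assume "(u, a) \<in> exits src trg len (Inr (e, x))" "(w, b) \<in> exits src trg len q"
  moreover have "w \<in> V" "0 \<le> b" using exits_V[OF assms(4)] \<open>(w, b) \<in> _\<close> by auto
  ultimately show "min x (len e - x) \<le> a + vd u w + b"
    using vdist_nonneg[of u w] src_V trg_V assms by auto
qed

lemma via_ge_edge2:
  assumes "e \<in> Ed" "0 < x" "x < len e" "p \<in> G"
  shows "min x (len e - x) \<le> via Ed src trg len p (Inr (e,x))"
proof (rule via_ge)
  fix u a w b assume "(u, a) \<in> exits src trg len p" "(w, b) \<in> exits src trg len (Inr (e, x))"
  moreover have "u \<in> V" "0 \<le> a" using exits_V[OF assms(4)] \<open>(u, a) \<in> _\<close> by auto
  ultimately show "min x (len e - x) \<le> a + vd u w + b"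
    using vdist_nonneg[of u w] src_V trg_V assms by auto
qed

lemma dist_sep:
  assumes "e \<in> Ed" "0 < x" "x < len e" "q \<in> G" "\<And>y. q \<noteq> Inr (e, y)"
  shows "min x (len e - x) \<le> dist (\<iota> (Inr (e,x))) (\<iota> q)"
proof -
  have "gdist Ed src trg len (Inr (e,x)) q = via Ed src trg len (Inr (e,x)) q"
  proof (cases q)
    case (Inl v) then show ?thesis by (simp add: gdist_Inl2)
  next
    case (Inr r)
    then obtain e' y where r: "q = Inr (e', y)" by (cases r) auto
    then have "e' \<noteq> e" using assms(5) by blast
    then show ?thesis using r by (simp add: gdist_Inr_ne)
  qed
  then show ?thesis using via_ge_edge[OF assms(1-4)] isom assms by auto
qed

lemma dist_same_edge:
  assumes "e \<in> Ed" "0 < x" "x < len e" "0 < y" "y < len e"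
  shows "dist (\<iota> (Inr (e,x))) (\<iota> (Inr (e,y))) \<le> \<bar>x - y\<bar>"
    and "min \<bar>x - y\<bar> (min x (len e - x)) \<le> dist (\<iota> (Inr (e,x))) (\<iota> (Inr (e,y)))"
  using isom assms gdist_Inr_eq[of Ed src trg len e x y] via_ge_edge[of e x "Inr (e,y)"]
  by auto

lemma dist_src: "e \<in> Ed \<Longrightarrow> 0 < x \<Longrightarrow> x < len e \<Longrightarrow> dist (\<iota> (Inr (e,x))) (\<iota> (Inl (src e))) \<le> x"
  using isom via_le[of "src e" x src trg len "Inr (e,x)" "src e" 0 "Inl (src e)" Ed]
    vdist_refl[of "src e"] src_V by (auto simp: gdist_Inl2)

lemma dist_trg: "e \<in> Ed \<Longrightarrow> 0 < x \<Longrightarrow> x < len e \<Longrightarrow> dist (\<iota> (Inr (e,x))) (\<iota> (Inl (trg e))) \<le> len e - x"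
  using isom via_le[of "trg e" "len e - x" src trg len "Inr (e,x)" "trg e" 0 "Inl (trg e)" Ed]
    vdist_refl[of "trg e"] trg_V by (auto simp: gdist_Inl2)

lemma dist_VV: "v \<in> V \<Longrightarrow> w \<in> V \<Longrightarrow> dist (\<iota> (Inl v)) (\<iota> (Inl w)) = vd v w"
  using isom gdist_VV by auto

lemma dist_src_trg: "e \<in> Ed \<Longrightarrow> dist (\<iota> (Inl (src e))) (\<iota> (Inl (trg e))) \<le> len e"
  using dist_VV vdist_edge src_V trg_V by auto

lemma dist_V_edge_less:
  assumes "v \<in> V" "e \<in> Ed" "0 < y" "y < len e" "dist (\<iota> (Inl v)) (\<iota> (Inr (e,y))) < \<rho>"
  shows "(dist (\<iota> (Inl v)) (\<iota> (Inl (src e))) < \<rho> \<and> y < \<rho>) \<or>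
         (dist (\<iota> (Inl v)) (\<iota> (Inl (trg e))) < \<rho> \<and> len e - y < \<rho>)"
proof -
  have "via Ed src trg len (Inl v) (Inr (e,y)) < \<rho>" using assms isom by (auto simp: gdist_Inl)
  from via_less[OF this] obtain u a w b where
    "(u, a) \<in> exits src trg len (Inl v)" "(w, b) \<in> exits src trg len (Inr (e,y))" "a + vd u w + b < \<rho>" by blast
  moreover have "0 \<le> vd v (src e)" "0 \<le> vd v (trg e)" using vdist_nonneg assms src_V trg_V by auto
  ultimately show ?thesis using dist_VV[OF assms(1)] src_V trg_V assms by auto
qed

lemma gdist_V_edge_ge:
  assumes "v \<in> V" "e \<in> Ed" "0 < x" "x < len e"
  shows "min x (len e - x) \<le> gdist Ed src trg len (Inl v) (Inr (e,x))"
  using via_ge_edge2[of e x "Inl v"] assms by (auto simp: gdist_Inl)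

lemma inj_edge:
  assumes "e \<in> Ed" "0 < x" "x < len e" "e' \<in> Ed" "0 < x'" "x' < len e'"
    and eq: "\<iota> (Inr (e,x)) = \<iota> (Inr (e',x'))"
  shows "e = e' \<and> x = x'"
proof -
  have "e = e'"
  proof (rule ccontr)
    assume "e \<noteq> e'"
    then have "min x (len e - x) \<le> 0" using dist_sep[of e x "Inr (e',x')"] assms by auto
    then show False using assms by auto
  qed
  moreover have "x = x'"
    using dist_same_edge(2)[of e x x'] assms \<open>e = e'\<close> by auto
  ultimately show ?thesis by simp
qed


definition gam :: "'e \<Rightarrow> real \<Rightarrow> 'x" where
  "gam e x = \<iota> (if x \<le> 0 then Inl (src e) else if len e \<le> x then Inl (trg e) else Inr (e, x))"

lemma gam_inner: "0 < x \<Longrightarrow> x < len e \<Longrightarrow> gam e x = \<iota> (Inr (e, x))"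
  by (simp add: gam_def)

lemma gam_lip_aux:
  assumes "e \<in> Ed" "x \<le> y" shows "dist (gam e x) (gam e y) \<le> \<bar>x - y\<bar>"
proof -
  have lp: "0 < len e" using len_pos assms by auto
  consider "y \<le> 0" | "x \<le> 0" "0 < y" "y < len e" | "x \<le> 0" "len e \<le> y"
    | "0 < x" "x < len e" "0 < y" "y < len e" | "0 < x" "x < len e" "len e \<le> y" | "len e \<le> x"
    using assms(2) by linarith
  then show ?thesis
  proof cases
    case 1 then show ?thesis using assms by (simp add: gam_def)
  next
    case 2 then show ?thesis using assms dist_src[of e y] by (simp add: gam_def dist_commute)
  next
    case 3 then show ?thesis using assms dist_src_trg[of e] lp by (simp add: gam_def)
  next
    case 4 then show ?thesis using assms dist_same_edge(1)[of e x y] by (simp add: gam_def)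
  next
    case 5 then show ?thesis using assms dist_trg[of e x] by (simp add: gam_def)
  next
    case 6 then show ?thesis using assms lp by (simp add: gam_def)
  qed
qed

lemma gam_lip: "e \<in> Ed \<Longrightarrow> dist (gam e x) (gam e y) \<le> \<bar>x - y\<bar>"
  using gam_lip_aux[of e x y] gam_lip_aux[of e y x] by (cases "x \<le> y") (auto simp: dist_commute abs_minus_commute)

lemma gam_cont: "e \<in> Ed \<Longrightarrow> continuous_on S (gam e)"
  unfolding continuous_on_iff
  by (metis dist_real_def gam_lip order_le_less_trans)

lemma gam_compact: "e \<in> Ed \<Longrightarrow> compact (gam e ` {a..b})"
  by (intro compact_continuous_image gam_cont compact_Icc)

lemma closure_local:
  assumes "y \<in> closure A" "closed K" "\<delta> > 0" "\<And>z. z \<in> A \<Longrightarrow> dist z y < \<delta> \<Longrightarrow> z \<in> K"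
  shows "y \<in> K"
proof -
  have "\<forall>e>0. \<exists>z\<in>K. dist z y < e"
  proof (intro allI impI)
    fix e :: real assume "e > 0"
    then obtain z where "z \<in> A" "dist z y < min e \<delta>"
      using assms(1,3) unfolding closure_approachable by (metis min_less_iff_conj)
    then show "\<exists>z\<in>K. dist z y < e" using assms(4) by auto
  qed
  then show ?thesis using closed_approachable[OF assms(2)] by blast
qed

abbreviation "X \<equiv> closure (\<iota> ` G)"

lemma edge_local:
  assumes "e \<in> Ed" "0 < x" "x < len e"
  shows "\<exists>\<rho>>0. \<forall>y\<in>X. dist y (\<iota> (Inr (e,x))) < \<rho> \<longrightarrow>
           (\<exists>x'. 0 < x' \<and> x' < len e \<and> y = \<iota> (Inr (e,x')) \<and> dist y (\<iota> (Inr (e,x))) = \<bar>x' - x\<bar>)"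
proof -
  define m where "m = min x (len e - x)"
  define \<rho> where "\<rho> = m / 2"
  have m: "m > 0" using assms by (simp add: m_def)
  have \<rho>: "\<rho> > 0" "\<rho> < m" using m by (auto simp: \<rho>_def)
  define K where "K = gam e ` {x - \<rho>..x + \<rho>}"
  have cK: "closed K" unfolding K_def using gam_compact[OF assms(1)] compact_imp_closed by blast
  show ?thesis
  proof (rule exI[of _ \<rho>], intro conjI ballI impI \<rho>)
    fix y assume y: "y \<in> X" "dist y (\<iota> (Inr (e,x))) < \<rho>"
    have "y \<in> K"
    proof (rule closure_local[OF y(1) cK])
      show "0 < \<rho> - dist y (\<iota> (Inr (e,x)))" using y by simp
      fix z assume z: "z \<in> \<iota> ` G" "dist z y < \<rho> - dist y (\<iota> (Inr (e, x)))"
      then obtain q where q: "q \<in> G" "z = \<iota> q" by auto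
      have dz: "dist (\<iota> (Inr (e,x))) z < \<rho>"
        using z(2) dist_triangle[of "\<iota> (Inr (e,x))" z y] by (simp add: dist_commute)
      have "\<exists>x''. q = Inr (e, x'')"
      proof (rule ccontr)
        assume "\<nexists>x''. q = Inr (e, x'')"
        then have "m \<le> dist (\<iota> (Inr (e,x))) z" using dist_sep[OF assms q(1)] q(2) by (auto simp: m_def)
        then show False using dz \<rho> by simp
      qed
      then obtain x'' where x'': "q = Inr (e, x'')" by auto
      then have x''b: "0 < x''" "x'' < len e" using q by auto
      have "min \<bar>x - x''\<bar> m \<le> dist (\<iota> (Inr (e,x))) z"
        using dist_same_edge(2)[OF assms x''b] q x'' by (simp add: m_def)
      then have "\<bar>x - x''\<bar> < \<rho>" using dz \<rho> by (auto simp: min_def split: if_splits)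
      then show "z \<in> K" unfolding K_def using q x'' gam_inner[OF x''b]
        by (intro image_eqI[of _ _ x'']) auto
    qed
    then obtain x' where x': "x' \<in> {x - \<rho>..x + \<rho>}" "y = gam e x'" by (auto simp: K_def)
    have x'b: "0 < x'" "x' < len e" using x' \<rho> by (auto simp: m_def)
    have "dist y (\<iota> (Inr (e,x))) = \<bar>x' - x\<bar>"
      using dist_same_edge[OF assms x'b] x' gam_inner[OF x'b] \<rho>
      by (auto simp: dist_commute m_def min_def abs_minus_commute split: if_splits)
    then show "\<exists>x'. 0 < x' \<and> x' < len e \<and> y = \<iota> (Inr (e,x')) \<and> dist y (\<iota> (Inr (e,x))) = \<bar>x' - x\<bar>"
      using x'b x' gam_inner[OF x'b] by auto
  qed
qed

lemma vertex_local:
  assumes v: "v \<in> V"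
  shows "\<exists>\<rho>>0. \<forall>y\<in>X. dist y (\<iota> (Inl v)) < \<rho> \<longrightarrow>
           y = \<iota> (Inl v) \<or> (\<exists>e x. e \<in> Ed \<and> 0 < x \<and> x < len e \<and> y = \<iota> (Inr (e,x)))"
proof -
  define N where "N = {e\<in>Ed. src e = v \<or> trg e = v}"
  have fN: "finite N" using loc_fin[OF v] by (simp add: N_def)
  define r where "r = Min (insert 1 (len ` N))"
  have r: "r > 0" using fN len_pos by (auto simp: r_def N_def)
  have rle: "\<And>e. e \<in> Ed \<Longrightarrow> src e = v \<or> trg e = v \<Longrightarrow> r \<le> len e"
    using fN by (auto simp: r_def N_def)
  define \<rho> where "\<rho> = r / 2"
  have \<rho>: "\<rho> > 0" "\<rho> < r" using r by (auto simp: \<rho>_def)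
  define N1 where "N1 = {e\<in>Ed. src e = v}"
  define N2 where "N2 = {e\<in>Ed. trg e = v}"
  have fN12: "finite N1" "finite N2" using fN by (auto simp: N1_def N2_def N_def elim: rev_finite_subset)
  define K where "K = insert (\<iota> (Inl v)) ((\<Union>e\<in>N1. gam e ` {0..\<rho>}) \<union> (\<Union>e\<in>N2. gam e ` {len e - \<rho>..len e}))"
  have cK: "closed K" unfolding K_def
    by (intro compact_imp_closed compact_insert compact_Un compact_UN fN12 gam_compact) (auto simp: N1_def N2_def)
  define T where "T = {y. y = \<iota> (Inl v) \<or> (\<exists>e x. e \<in> Ed \<and> 0 < x \<and> x < len e \<and> y = \<iota> (Inr (e,x)))}"
  have KT: "K \<subseteq> T"
  proof
    fix y assume "y \<in> K"
    then consider "y = \<iota> (Inl v)" | e x where "e \<in> N1" "x \<in> {0..\<rho>}" "y = gam e x"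
      | e x where "e \<in> N2" "x \<in> {len e - \<rho>..len e}" "y = gam e x"
      unfolding K_def by blast
    then show "y \<in> T"
    proof cases
      case 1 then show ?thesis by (simp add: T_def)
    next
      case (2 e x)
      then have "r \<le> len e" using rle by (auto simp: N1_def)
      then have "x < len e" using 2 \<rho> by auto
      show ?thesis
      proof (cases "x \<le> 0")
        case True then show ?thesis using 2 by (simp add: T_def gam_def N1_def)
      next
        case False then have "y = \<iota> (Inr (e,x))" "e \<in> Ed" using 2 \<open>x < len e\<close> by (auto simp: gam_def N1_def)
        moreover have "0 < x" using False by simp
        ultimately show ?thesis using \<open>x < len e\<close> unfolding T_def by blast
      qed
    next
      case (3 e x)
      then have "r \<le> len e" using rle by (auto simp: N2_def)
      then have "0 < x" using 3 \<rho> by auto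
      show ?thesis
      proof (cases "len e \<le> x")
        case True then show ?thesis using 3 \<open>0 < x\<close> by (simp add: T_def gam_def N2_def)
      next
        case False then have "y = \<iota> (Inr (e,x))" "e \<in> Ed" using 3 \<open>0 < x\<close> by (auto simp: gam_def N2_def)
        moreover have "x < len e" using False by simp
        ultimately show ?thesis using \<open>0 < x\<close> unfolding T_def by blast
      qed
    qed
  qed
  show ?thesis
  proof (intro exI[of _ \<rho>] conjI ballI impI \<rho>)
    fix y assume y: "y \<in> X" "dist y (\<iota> (Inl v)) < \<rho>"
    have "y \<in> K"
    proof (rule closure_local[OF y(1) cK])
      show "0 < \<rho> - dist y (\<iota> (Inl v))" using y by simp
      fix z assume z: "z \<in> \<iota> ` G" "dist z y < \<rho> - dist y (\<iota> (Inl v))"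
      then obtain q where q: "q \<in> G" "z = \<iota> q" by auto
      have dz: "dist (\<iota> (Inl v)) z < \<rho>"
        using z(2) dist_triangle[of "\<iota> (Inl v)" z y] by (simp add: dist_commute)
      show "z \<in> K"
      proof (cases q)
        case (Inl w)
        then have w: "w \<in> V" using q by simp
        have "w = v"
        proof (rule ccontr)
          assume "w \<noteq> v"
          then have "r \<le> vd v w" using vdist_lower[OF v w] rle by auto
          then show False using dz dist_VV[OF v w] q Inl \<rho> by auto
        qed
        then show ?thesis using q Inl by (simp add: K_def)
      next
        case (Inr ex)
        then obtain e x where ex: "q = Inr (e, x)" by (cases ex) auto
        then have eb: "e \<in> Ed" "0 < x" "x < len e" using q by auto
        from dist_V_edge_less[OF v eb dz[unfolded q ex]]
        consider "dist (\<iota> (Inl v)) (\<iota> (Inl (src e))) < \<rho>" "x < \<rho>"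
          | "dist (\<iota> (Inl v)) (\<iota> (Inl (trg e))) < \<rho>" "len e - x < \<rho>" by blast
        then show ?thesis
        proof cases
          case 1
          have "src e = v"
          proof (rule ccontr)
            assume "src e \<noteq> v"
            then have "r \<le> vd v (src e)" using vdist_lower[OF v src_V[OF eb(1)]] rle by auto
            then show False using 1 dist_VV[OF v src_V[OF eb(1)]] \<rho> by auto
          qed
          then have "e \<in> N1" using eb by (simp add: N1_def)
          moreover have "z = gam e x" using q ex gam_inner[OF eb(2,3)] by simp
          moreover have "x \<in> {0..\<rho>}" using 1 eb by auto
          ultimately show ?thesis unfolding K_def by blast
        next
          case 2
          have "trg e = v"
          proof (rule ccontr)
            assume "trg e \<noteq> v"
            then have "r \<le> vd v (trg e)" using vdist_lower[OF v trg_V[OF eb(1)]] rle by auto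
            then show False using 2 dist_VV[OF v trg_V[OF eb(1)]] \<rho> by auto
          qed
          then have "e \<in> N2" using eb by (simp add: N2_def)
          moreover have "z = gam e x" using q ex gam_inner[OF eb(2,3)] by simp
          moreover have "x \<in> {len e - \<rho>..len e}" using 2 eb by auto
          ultimately show ?thesis unfolding K_def by blast
        qed
      qed
    qed
    then show "y = \<iota> (Inl v) \<or> (\<exists>e x. e \<in> Ed \<and> 0 < x \<and> x < len e \<and> y = \<iota> (Inr (e,x)))"
      using KT by (auto simp: T_def)
  qed
qed

lemma interior_local:
  assumes "p \<in> \<iota> ` (G - Inl ` Bd)"
  shows "\<exists>\<rho>>0. \<forall>y\<in>X. dist y p < \<rho> \<longrightarrow> y \<in> \<iota> ` (G - Inl ` Bd)"
proof -
  obtain q where q: "q \<in> G" "q \<notin> Inl ` Bd" "p = \<iota> q" using assms by auto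
  show ?thesis
  proof (cases q)
    case (Inl v)
    then have v: "v \<in> V" "v \<notin> Bd" using q by auto
    obtain \<rho> where "\<rho> > 0" and h: "\<forall>y\<in>X. dist y (\<iota> (Inl v)) < \<rho> \<longrightarrow>
           y = \<iota> (Inl v) \<or> (\<exists>e x. e \<in> Ed \<and> 0 < x \<and> x < len e \<and> y = \<iota> (Inr (e,x)))"
      using vertex_local[OF v(1)] by blast
    show ?thesis
    proof (intro exI[of _ \<rho>] conjI ballI impI \<open>\<rho> > 0\<close>)
      fix y assume "y \<in> X" "dist y p < \<rho>"
      then have "y = \<iota> (Inl v) \<or> (\<exists>e x. e \<in> Ed \<and> 0 < x \<and> x < len e \<and> y = \<iota> (Inr (e,x)))"
        using h q Inl by auto
      then show "y \<in> \<iota> ` (G - Inl ` Bd)" using v by (auto intro: image_eqI)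
    qed
  next
    case (Inr ex)
    then obtain e x where ex: "q = Inr (e, x)" by (cases ex) auto
    then have eb: "e \<in> Ed" "0 < x" "x < len e" using q by auto
    obtain \<rho> where "\<rho> > 0" and h: "\<forall>y\<in>X. dist y (\<iota> (Inr (e,x))) < \<rho> \<longrightarrow>
           (\<exists>x'. 0 < x' \<and> x' < len e \<and> y = \<iota> (Inr (e,x')) \<and> dist y (\<iota> (Inr (e,x))) = \<bar>x' - x\<bar>)"
      using edge_local[OF eb] by blast
    show ?thesis
    proof (intro exI[of _ \<rho>] conjI ballI impI \<open>\<rho> > 0\<close>)
      fix y assume "y \<in> X" "dist y p < \<rho>"
      then obtain x' where "0 < x'" "x' < len e" "y = \<iota> (Inr (e,x'))"
        using h q ex by auto
      then show "y \<in> \<iota> ` (G - Inl ` Bd)" using eb by (auto intro: image_eqI)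
    qed
  qed
qed

lemma boundary_closed: "closed (X - \<iota> ` (G - Inl ` Bd))"
proof -
  have "y \<in> X - \<iota> ` (G - Inl ` Bd)" if "\<forall>e>0. \<exists>z\<in>X - \<iota> ` (G - Inl ` Bd). dist z y < e" for y
  proof -
    have "y \<in> X" using that closed_approachable[of X y] by auto
    moreover have "y \<notin> \<iota> ` (G - Inl ` Bd)"
    proof
      assume "y \<in> \<iota> ` (G - Inl ` Bd)"
      then obtain \<rho> where "\<rho> > 0" "\<forall>z\<in>X. dist z y < \<rho> \<longrightarrow> z \<in> \<iota> ` (G - Inl ` Bd)"
        using interior_local by blast
      then show False using that by blast
    qed
    ultimately show ?thesis by simp
  qed
  then have "closure (X - \<iota> ` (G - Inl ` Bd)) \<subseteq> X - \<iota> ` (G - Inl ` Bd)"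
    by (intro subsetI) (simp only: closure_approachable)
  then show ?thesis using closure_subset_eq by blast
qed

end



lemma local_eq_funpow_deriv:
  assumes "open U" "\<And>y. y \<in> U \<Longrightarrow> f y = g y"
  shows "x \<in> U \<Longrightarrow> (deriv ^^ k) f x = (deriv ^^ k) g x"
proof (induction k arbitrary: x)
  case 0 then show ?case using assms by simp
next
  case (Suc k)
  have "eventually (\<lambda>y. (deriv ^^ k) f y = (deriv ^^ k) g y) (nhds x)"
    unfolding eventually_nhds using Suc.IH Suc.prems assms(1) by blast
  then show ?case by (simp add: deriv_cong_ev)
qed

lemma local_smooth:
  assumes "open U" "x \<in> U" "\<And>y. y \<in> U \<Longrightarrow> f y = g y" "\<And>k. ck k g"
  shows "(deriv ^^ k) f differentiable (at x)"
proof -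
  have "(deriv ^^ k) g differentiable (at x)" using ck_deriv_differentiable assms(4) by blast
  then obtain D where D: "((deriv ^^ k) g has_real_derivative D) (at x)" by (auto simp: real_differentiable_def)
  have "((deriv ^^ k) f has_real_derivative D) (at x)"
    by (rule has_field_derivative_transform_within_open[OF D assms(1,2)])
       (use local_eq_funpow_deriv[OF assms(1,3)] in auto)
  then show ?thesis by (auto simp: real_differentiable_def)
qed

lemma local_const_deriv:
  assumes "open U" "x \<in> U" "\<And>y. y \<in> U \<Longrightarrow> f y = C"
  shows "deriv f x = 0"
proof -
  have "deriv f x = deriv (\<lambda>_. C) x"
    using local_eq_funpow_deriv[OF assms(1), of f "\<lambda>_. C" x 1] assms by simp
  then show ?thesis by simp
qed

lemma ck_isCont: "ck (Suc k) f \<Longrightarrow> isCont f x"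
  by (auto intro: DERIV_isCont)

theorem lemma2p6:
  fixes V :: "'v set" and Ed :: "'e set" and s t :: "'e \<Rightarrow> 'v" and len :: "'e \<Rightarrow> real"
    and Bd :: "'v set"
    and \<iota> :: "'v + 'e \<times> real \<Rightarrow> 'x::metric_space"
    and E :: "'x set"
  assumes graph: "metric_graph V Ed s t len"
    and conn: "graph_connected V Ed s t"
    and Bd_sub: "Bd \<subseteq> V"
    and Bd_deg1: "{v \<in> V. degree Ed s t v = 1} \<subseteq> Bd"
    and isom: "\<forall>p\<in>gpoints V Ed len. \<forall>q\<in>gpoints V Ed len.
                 dist (\<iota> p) (\<iota> q) = gdist Ed s t len p q"
    and compl: "complete (closure (\<iota> ` gpoints V Ed len))"
    and cpt: "compact (closure (\<iota> ` gpoints V Ed len))"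
    and tdisc: "totally_disconnected
                  (closure (\<iota> ` gpoints V Ed len) - \<iota> ` (gpoints V Ed len - Inl ` Bd))"
    and E_open: "openin (top_of_set
                  (closure (\<iota> ` gpoints V Ed len) - \<iota> ` (gpoints V Ed len - Inl ` Bd))) E"
    and E_closed: "closedin (top_of_set
                  (closure (\<iota> ` gpoints V Ed len) - \<iota> ` (gpoints V Ed len - Inl ` Bd))) E"
    and E_ne: "E \<noteq> {}"
    and Ec_ne: "(closure (\<iota> ` gpoints V Ed len) - \<iota> ` (gpoints V Ed len - Inl ` Bd)) - E \<noteq> {}"
  shows "\<exists>\<phi>. class_A V Ed s t len \<iota> (closure (\<iota> ` gpoints V Ed len)) \<phi> \<and>
             (\<forall>x\<in>E. \<phi> x = 1) \<and>
             (\<forall>x\<in>(closure (\<iota> ` gpoints V Ed len) - \<iota> ` (gpoints V Ed len - Inl ` Bd)) - E. \<phi> x = 0)"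
proof -
  interpret MG V Ed s t len \<iota> using graph conn isom by unfold_locales
  define XX where "XX = closure (\<iota> ` gpoints V Ed len)"
  define I where "I = \<iota> ` (gpoints V Ed len - Inl ` Bd)"
  define Bdry where "Bdry = XX - I"
  define Ec where "Ec = Bdry - E"
  have cB: "closed Bdry" unfolding Bdry_def XX_def I_def by (rule boundary_closed)
  have EB: "E \<subseteq> Bdry" using E_closed unfolding Bdry_def XX_def I_def by (auto dest: closedin_imp_subset)
  have cE: "closed E" using closedin_closed_trans[OF E_closed] cB unfolding Bdry_def XX_def I_def by blast
  have "closedin (top_of_set Bdry) Ec"
    using E_open unfolding Ec_def Bdry_def XX_def I_def by (simp add: openin_closedin_eq)
  then have cEc: "closed Ec" using closedin_closed_trans cB by blast
  have Ecne: "Ec \<noteq> {}" using Ec_ne unfolding Ec_def Bdry_def XX_def I_def .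
  have EEc: "E \<inter> Ec = {}" by (auto simp: Ec_def)
  have BEEc: "Bdry = E \<union> Ec" using EB by (auto simp: Ec_def)
  have cX: "closed XX" by (simp add: XX_def)
  have GX: "\<And>q. q \<in> gpoints V Ed len \<Longrightarrow> \<iota> q \<in> XX" by (auto simp: XX_def intro: closure_subset[THEN subsetD])

  define g where "g y = infdist y Ec / (infdist y E + infdist y Ec)" for y
  have den: "infdist y E + infdist y Ec > 0" for y
  proof -
    have "infdist y E \<ge> 0" "infdist y Ec \<ge> 0" by (auto simp: infdist_nonneg)
    moreover have "\<not> (infdist y E = 0 \<and> infdist y Ec = 0)"
      using in_closed_iff_infdist_zero[OF cE E_ne] in_closed_iff_infdist_zero[OF cEc Ecne] EEc by auto
    ultimately show ?thesis by linarith
  qed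
  have g_cont: "continuous_on UNIV g"
    unfolding g_def[abs_def] using den
    by (intro continuous_intros) (metis less_irrefl)
  have gE: "g y = 1" if "y \<in> E" for y
    using that in_closed_iff_infdist_zero[OF cE E_ne] den[of y] by (simp add: g_def)
  have gEc: "g y = 0" if "y \<in> Ec" for y
    using that in_closed_iff_infdist_zero[OF cEc Ecne] by (simp add: g_def)
  have side: "u \<noteq> c \<and> (u > c \<longleftrightarrow> w > c)" if "\<bar>u - w\<bar> < \<bar>w - c\<bar>" for u w c :: real
    using that by (auto simp: abs_real_def split: if_splits)

  have cntV: "countable ((\<lambda>v. g (\<iota> (Inl v))) ` V)" using graph by (auto simp: metric_graph_def)
  obtain c where c01: "0 < c" "c < 1" and cV: "\<And>v. v \<in> V \<Longrightarrow> g (\<iota> (Inl v)) \<noteq> c"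
  proof -
    have "\<not> {0<..<1::real} \<subseteq> (\<lambda>v. g (\<iota> (Inl v))) ` V"
      using uncountable_open_interval[of 0 1] countable_subset cntV by auto
    then obtain c where "c \<in> {0<..<1::real}" "c \<notin> (\<lambda>v. g (\<iota> (Inl v))) ` V" by blast
    then show ?thesis using that[of c] by auto
  qed

  define Kc where "Kc = {y \<in> XX. g y = c}"
  have "closed Kc" unfolding Kc_def
    by (rule continuous_closed_preimage_constant[OF continuous_on_subset[OF g_cont] cX]) simp
  then have cKc: "compact Kc" using compact_Int_closed[OF cpt[folded XX_def], of Kc]
    by (metis (no_types, lifting) Kc_def inf.absorb_iff2 mem_Collect_eq subsetI)
  have P4: "\<exists>e x. e \<in> Ed \<and> 0 < x \<and> x < len e \<and> y = \<iota> (Inr (e,x))" if "y \<in> Kc" for y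
  proof -
    have "y \<notin> Bdry" using that gE gEc c01 BEEc by (auto simp: Kc_def)
    then have "y \<in> I" using that by (auto simp: Bdry_def Kc_def)
    then obtain q where q: "q \<in> gpoints V Ed len" "q \<notin> Inl ` Bd" "y = \<iota> q" by (auto simp: I_def)
    show ?thesis
    proof (cases q)
      case (Inl v) then show ?thesis using q cV[of v] that by (auto simp: Kc_def)
    next
      case (Inr ex) then show ?thesis using q by (cases ex) auto
    qed
  qed

  define F where "F = {e\<in>Ed. \<exists>x. 0 < x \<and> x < len e \<and> g (\<iota> (Inr (e,x))) = c}"
  have FE: "F \<subseteq> Ed" by (auto simp: F_def)
  have fF: "finite F"
  proof -
    have "\<forall>y\<in>Kc. \<exists>ex. fst ex \<in> Ed \<and> 0 < snd ex \<and> snd ex < len (fst ex) \<and> y = \<iota> (Inr (fst ex, snd ex))"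
      using P4 by fastforce
    then obtain pe where pe: "\<forall>y\<in>Kc. fst (pe y) \<in> Ed \<and> 0 < snd (pe y) \<and> snd (pe y) < len (fst (pe y))
        \<and> y = \<iota> (Inr (fst (pe y), snd (pe y)))"
      by (metis bchoice)
    define rr where "rr y = min (snd (pe y)) (len (fst (pe y)) - snd (pe y))" for y
    have "Kc \<subseteq> (\<Union>y\<in>Kc. ball y (rr y))" using pe by (force simp: rr_def)
    then obtain T where T: "T \<subseteq> Kc" "finite T" "Kc \<subseteq> (\<Union>y\<in>T. ball y (rr y))"
      using compactE_image[OF cKc, of Kc "\<lambda>y. ball y (rr y)"] by auto
    have "F \<subseteq> (\<lambda>y. fst (pe y)) ` T"
    proof
      fix e assume "e \<in> F"
      then obtain x where x: "e \<in> Ed" "0 < x" "x < len e" "g (\<iota> (Inr (e,x))) = c" by (auto simp: F_def)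
      then have "\<iota> (Inr (e,x)) \<in> Kc" using GX by (auto simp: Kc_def)
      then obtain p where p: "p \<in> T" "\<iota> (Inr (e,x)) \<in> ball p (rr p)" using T by auto
      have pK: "p \<in> Kc" using p T by auto
      have "fst (pe p) = e"
      proof (rule ccontr)
        assume ne: "fst (pe p) \<noteq> e"
        have "rr p \<le> dist (\<iota> (Inr (fst (pe p), snd (pe p)))) (\<iota> (Inr (e,x)))"
          unfolding rr_def using pe pK ne x by (intro dist_sep) auto
        then show False using p pe pK by (auto simp: dist_commute)
      qed
      then show "e \<in> (\<lambda>y. fst (pe y)) ` T" using p by auto
    qed
    then show ?thesis using T(2) finite_subset by blast
  qed
  have gam_g_cont: "continuous_on UNIV (\<lambda>x. g (gam e x))" if "e \<in> Ed" for e
    using continuous_on_compose[OF gam_cont[OF that] continuous_on_subset[OF g_cont]]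
    by (simp add: o_def)
  have "\<forall>e\<in>Ed. \<exists>ab. 0 < fst ab \<and> fst ab < snd ab \<and> snd ab < len e \<and>
      (\<forall>x. 0 < x \<and> x \<le> fst ab \<longrightarrow> \<bar>g (\<iota> (Inr (e,x))) - g (\<iota> (Inl (s e)))\<bar> < \<bar>g (\<iota> (Inl (s e))) - c\<bar>) \<and>
      (\<forall>x. snd ab \<le> x \<and> x < len e \<longrightarrow> \<bar>g (\<iota> (Inr (e,x))) - g (\<iota> (Inl (t e)))\<bar> < \<bar>g (\<iota> (Inl (t e))) - c\<bar>)"
  proof
    fix e assume e: "e \<in> Ed"
    have lp: "len e > 0" using len_pos e by simp
    have g0: "g (gam e 0) = g (\<iota> (Inl (s e)))" by (simp add: gam_def)
    have gl: "g (gam e (len e)) = g (\<iota> (Inl (t e)))" using lp by (simp add: gam_def)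
    have p0: "\<bar>g (\<iota> (Inl (s e))) - c\<bar> > 0" using cV src_V e by auto
    have pl: "\<bar>g (\<iota> (Inl (t e))) - c\<bar> > 0" using cV trg_V e by auto
    obtain d1 where d1: "d1 > 0" "\<And>x. dist x 0 < d1 \<Longrightarrow> dist (g (gam e x)) (g (gam e 0)) < \<bar>g (\<iota> (Inl (s e))) - c\<bar>"
      using gam_g_cont[OF e] p0 unfolding continuous_on_iff by (metis UNIV_I)
    obtain d2 where d2: "d2 > 0" "\<And>x. dist x (len e) < d2 \<Longrightarrow> dist (g (gam e x)) (g (gam e (len e))) < \<bar>g (\<iota> (Inl (t e))) - c\<bar>"
      using gam_g_cont[OF e] pl unfolding continuous_on_iff by (metis UNIV_I)
    define a where "a = min (d1/2) (len e/3)"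
    define b where "b = max (len e - d2/2) (2*len e/3)"
    show "\<exists>ab. 0 < fst ab \<and> fst ab < snd ab \<and> snd ab < len e \<and>
      (\<forall>x. 0 < x \<and> x \<le> fst ab \<longrightarrow> \<bar>g (\<iota> (Inr (e,x))) - g (\<iota> (Inl (s e)))\<bar> < \<bar>g (\<iota> (Inl (s e))) - c\<bar>) \<and>
      (\<forall>x. snd ab \<le> x \<and> x < len e \<longrightarrow> \<bar>g (\<iota> (Inr (e,x))) - g (\<iota> (Inl (t e)))\<bar> < \<bar>g (\<iota> (Inl (t e))) - c\<bar>)"
    proof (rule exI[of _ "(a,b)"], intro conjI allI impI)
      show "0 < fst (a,b)" "fst (a,b) < snd (a,b)" "snd (a,b) < len e"
        using d1 d2 lp by (auto simp: a_def b_def)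
    next
      fix x assume x: "0 < x \<and> x \<le> fst (a,b)"
      then have "x < len e" "dist x 0 < d1" using lp d1 by (auto simp: a_def dist_real_def)
      then show "\<bar>g (\<iota> (Inr (e,x))) - g (\<iota> (Inl (s e)))\<bar> < \<bar>g (\<iota> (Inl (s e))) - c\<bar>"
        using d1(2)[of x] x g0 gam_inner[of x e] by (simp add: dist_real_def)
    next
      fix x assume x: "snd (a,b) \<le> x \<and> x < len e"
      then have "0 < x" "dist x (len e) < d2" using lp d2 by (auto simp: b_def dist_real_def)
      then show "\<bar>g (\<iota> (Inr (e,x))) - g (\<iota> (Inl (t e)))\<bar> < \<bar>g (\<iota> (Inl (t e))) - c\<bar>"
        using d2(2)[of x] x gl gam_inner[of x e] by (simp add: dist_real_def)
    qed
  qed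
  then obtain ab where ab: "\<forall>e\<in>Ed. 0 < fst (ab e) \<and> fst (ab e) < snd (ab e) \<and> snd (ab e) < len e \<and>
      (\<forall>x. 0 < x \<and> x \<le> fst (ab e) \<longrightarrow> \<bar>g (\<iota> (Inr (e,x))) - g (\<iota> (Inl (s e)))\<bar> < \<bar>g (\<iota> (Inl (s e))) - c\<bar>) \<and>
      (\<forall>x. snd (ab e) \<le> x \<and> x < len e \<longrightarrow> \<bar>g (\<iota> (Inr (e,x))) - g (\<iota> (Inl (t e)))\<bar> < \<bar>g (\<iota> (Inl (t e))) - c\<bar>)"
    by (metis bchoice)
  define aa where "aa e = fst (ab e)" for e
  define bb where "bb e = snd (ab e)" for e
  have ab_ord: "0 < aa e" "aa e < bb e" "bb e < len e" if "e \<in> Ed" for e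
    using ab that by (auto simp: aa_def bb_def)
  define ind where "ind y = (if g y > c then 1 else 0::real)" for y
  define L where "L v = ind (\<iota> (Inl v))" for v
  have sideS: "g (\<iota> (Inr (e,x))) \<noteq> c \<and> ind (\<iota> (Inr (e,x))) = L (s e)"
    if "e \<in> Ed" "0 < x" "x \<le> aa e" for e x
  proof -
    have "\<bar>g (\<iota> (Inr (e,x))) - g (\<iota> (Inl (s e)))\<bar> < \<bar>g (\<iota> (Inl (s e))) - c\<bar>"
      using ab that by (auto simp: aa_def)
    from side[OF this] show ?thesis by (simp add: ind_def L_def)
  qed
  have sideT: "g (\<iota> (Inr (e,x))) \<noteq> c \<and> ind (\<iota> (Inr (e,x))) = L (t e)"
    if "e \<in> Ed" "bb e \<le> x" "x < len e" for e x
  proof -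
    have "\<bar>g (\<iota> (Inr (e,x))) - g (\<iota> (Inl (t e)))\<bar> < \<bar>g (\<iota> (Inl (t e))) - c\<bar>"
      using ab that by (auto simp: bb_def)
    from side[OF this] show ?thesis by (simp add: ind_def L_def)
  qed

  define h where "h e x = L (s e) + (L (t e) - L (s e)) * step ((1 / (bb e - aa e)) * x + (- aa e / (bb e - aa e)))" for e x
  have ck_h: "ck k (h e)" for e k
  proof -
    have "h e = (\<lambda>x. L (s e) + (L (t e) - L (s e)) * step ((1 / (bb e - aa e)) * x + (- aa e / (bb e - aa e))))"
      by (simp add: h_def fun_eq_iff)
    moreover have "ck k (\<lambda>x. L (s e) + (L (t e) - L (s e)) * step ((1 / (bb e - aa e)) * x + (- aa e / (bb e - aa e))))"
      by (intro ck_add ck_mult ck_const ck_affine ck_step)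
    ultimately show ?thesis by simp
  qed
  have h_arg: "(1 / (bb e - aa e)) * x + (- aa e / (bb e - aa e)) = (x - aa e) / (bb e - aa e)" if "e \<in> Ed" for e x
    by (simp add: diff_divide_distrib)
  have h_lo: "h e x = L (s e)" if "e \<in> Ed" "x \<le> aa e" for e x
  proof -
    have "(x - aa e) / (bb e - aa e) \<le> 0" using that ab_ord[OF that(1)] by (intro divide_nonpos_pos) auto
    then show ?thesis using h_arg[OF that(1)] step_le0 by (simp add: h_def)
  qed
  have h_hi: "h e x = L (t e)" if "e \<in> Ed" "bb e \<le> x" for e x
  proof -
    have "1 \<le> (x - aa e) / (bb e - aa e)" using that ab_ord[OF that(1)] by (simp add: le_divide_eq_1)
    then show ?thesis using h_arg[OF that(1)] step_ge1 by (simp add: h_def)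
  qed
  have h_ind: "h e x = ind (\<iota> (Inr (e,x)))" if "e \<in> Ed" "0 < x" "x < len e" "\<not> (aa e < x \<and> x < bb e)" for e x
  proof (cases "x \<le> aa e")
    case True then show ?thesis using h_lo sideS that by auto
  next
    case False then have "bb e \<le> x" using that by auto
    then show ?thesis using h_hi sideT that by auto
  qed

  define Q where "Q ex y \<longleftrightarrow> fst ex \<in> F \<and> 0 < snd ex \<and> snd ex < len (fst ex) \<and> y = \<iota> (Inr ex)" for ex y
  define \<phi> where "\<phi> y = (if \<exists>ex. Q ex y then case_prod h (SOME ex. Q ex y) else ind y)" for y
  have \<phi>F: "\<phi> (\<iota> (Inr (e,x))) = h e x" if "e \<in> F" "0 < x" "x < len e" for e x
  proof -
    have ex: "\<exists>ex. Q ex (\<iota> (Inr (e,x)))" using that by (auto simp: Q_def intro!: exI[of _ "(e,x)"])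
    then have q: "Q (SOME ex. Q ex (\<iota> (Inr (e,x)))) (\<iota> (Inr (e,x)))" by (rule someI_ex)
    obtain e' x' where ex': "(SOME ex. Q ex (\<iota> (Inr (e,x)))) = (e', x')" by fastforce
    have "e' = e \<and> x' = x" using q ex' inj_edge[of e' x' e x] that FE by (auto simp: Q_def)
    then show ?thesis using ex ex' by (simp add: \<phi>_def)
  qed
  have \<phi>N: "\<phi> y = ind y" if "\<not> (\<exists>e x. e \<in> F \<and> 0 < x \<and> x < len e \<and> y = \<iota> (Inr (e,x)))" for y
    using that by (auto simp: \<phi>_def Q_def)
  define M where "M = (\<Union>e\<in>F. gam e ` {aa e..bb e})"
  have cM: "closed M" unfolding M_def
    by (intro compact_imp_closed compact_UN fF gam_compact) (use FE in auto)
  have notM: "\<phi> y = ind y" if "y \<notin> M" for y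
  proof (cases "\<exists>e x. e \<in> F \<and> 0 < x \<and> x < len e \<and> y = \<iota> (Inr (e,x))")
    case True
    then obtain e x where ex: "e \<in> F" "0 < x" "x < len e" "y = \<iota> (Inr (e,x))" by blast
    have "\<not> (aa e \<le> x \<and> x \<le> bb e)"
    proof
      assume "aa e \<le> x \<and> x \<le> bb e"
      moreover have "y = gam e x" using ex gam_inner[of x e] by simp
      ultimately have "y \<in> M" unfolding M_def by (intro UN_I[OF ex(1)] image_eqI[of y "gam e" x]) auto
      then show False using that by simp
    qed
    then show ?thesis using \<phi>F[OF ex(1-3)] h_ind[of e x] ex FE by auto
  next
    case False then show ?thesis by (rule \<phi>N)
  qed
  have h_cont: "continuous_on UNIV (h e)" for e
    using ck_isCont[OF ck_h[of "Suc 0" e]] by (simp add: continuous_at_imp_continuous_on)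
  have \<phi>_cont: "continuous_on XX \<phi>"
    unfolding continuous_on_iff
  proof (intro ballI allI impI)
    fix p and \<epsilon> :: real assume p: "p \<in> XX" and \<epsilon>: "0 < \<epsilon>"
    show "\<exists>d>0. \<forall>y\<in>XX. dist y p < d \<longrightarrow> dist (\<phi> y) (\<phi> p) < \<epsilon>"
    proof (cases "p \<in> M")
      case True
      then obtain e x0 where e: "e \<in> F" "aa e \<le> x0" "x0 \<le> bb e" "p = gam e x0" by (auto simp: M_def)
      have eE: "e \<in> Ed" using e FE by auto
      have x0b: "0 < x0" "x0 < len e" using e ab_ord[OF eE] by auto
      have p': "p = \<iota> (Inr (e,x0))" using e gam_inner[OF x0b] by simp
      obtain \<rho> where \<rho>: "\<rho> > 0" "\<forall>y\<in>XX. dist y p < \<rho> \<longrightarrow>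
           (\<exists>x'. 0 < x' \<and> x' < len e \<and> y = \<iota> (Inr (e,x')) \<and> dist y p = \<bar>x' - x0\<bar>)"
        using edge_local[OF eE x0b] p' unfolding XX_def by auto
      obtain d1 where d1: "d1 > 0" "\<And>x'. dist x' x0 < d1 \<Longrightarrow> dist (h e x') (h e x0) < \<epsilon>"
        using h_cont[of e] \<epsilon> unfolding continuous_on_iff by (metis UNIV_I)
      show ?thesis
      proof (rule exI[of _ "min \<rho> d1"], intro conjI ballI impI)
        show "0 < min \<rho> d1" using \<rho> d1 by simp
        fix y assume y: "y \<in> XX" "dist y p < min \<rho> d1"
        then obtain x' where x': "0 < x'" "x' < len e" "y = \<iota> (Inr (e,x'))" "dist y p = \<bar>x' - x0\<bar>"
          using \<rho> by auto
        have "dist x' x0 < d1" using x' y by (simp add: dist_real_def)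
        then show "dist (\<phi> y) (\<phi> p) < \<epsilon>" using d1 \<phi>F[OF e(1) x'(1,2)] \<phi>F[OF e(1) x0b] x' p' by simp
      qed
    next
      case False
      have gp: "g p \<noteq> c"
      proof
        assume gpc: "g p = c"
        then have "p \<in> Kc" using p by (simp add: Kc_def)
        then obtain e x where ex: "e \<in> Ed" "0 < x" "x < len e" "p = \<iota> (Inr (e,x))" using P4 by blast
        then have eF: "e \<in> F" using gpc by (auto simp: F_def)
        have "\<not> (aa e \<le> x \<and> x \<le> bb e)"
        proof
          assume "aa e \<le> x \<and> x \<le> bb e"
          moreover have "p = gam e x" using ex gam_inner[of x e] by simp
          ultimately have "p \<in> M" unfolding M_def by (intro UN_I[OF eF] image_eqI[of p "gam e" x]) auto
          then show False using False by simp
        qed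
        then show False using sideS[of e x] sideT[of e x] ex gpc by (cases "x \<le> aa e") auto
      qed
      then have gpc: "\<bar>g p - c\<bar> > 0" by simp
      obtain d1 where d1: "d1 > 0" "\<And>y. dist y p < d1 \<Longrightarrow> dist (g y) (g p) < \<bar>g p - c\<bar>"
        using g_cont gpc unfolding continuous_on_iff by (metis UNIV_I)
      have "open (- M)" using cM by (simp add: open_Compl)
      then obtain d2 where d2: "d2 > 0" "ball p d2 \<subseteq> - M" using False unfolding open_contains_ball by auto
      show ?thesis
      proof (rule exI[of _ "min d1 d2"], intro conjI ballI impI)
        show "0 < min d1 d2" using d1 d2 by simp
        fix y assume y: "y \<in> XX" "dist y p < min d1 d2"
        then have "y \<notin> M" using d2 by (auto simp: dist_commute)
        then have "\<phi> y = ind y" by (rule notM)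
        moreover have "\<phi> p = ind p" using False by (rule notM)
        moreover have "ind y = ind p"
          using side[of "g y" "g p" c] d1 y by (auto simp: ind_def dist_real_def)
        ultimately show "dist (\<phi> y) (\<phi> p) < \<epsilon>" using \<epsilon> by simp
      qed
    qed
  qed
  have ef_F: "edge_fun \<phi> \<iota> e x = h e x" if "e \<in> F" "0 < x" "x < len e" for e x
    using \<phi>F[OF that] by (simp add: edge_fun_def)
  have ef_N: "edge_fun \<phi> \<iota> e x = ind (\<iota> (Inr (e,x)))" if "e \<in> Ed" "e \<notin> F" "0 < x" "x < len e" for e x
  proof -
    have "\<not> (\<exists>e' x'. e' \<in> F \<and> 0 < x' \<and> x' < len e' \<and> \<iota> (Inr (e,x)) = \<iota> (Inr (e',x')))"
    proof
      assume "\<exists>e' x'. e' \<in> F \<and> 0 < x' \<and> x' < len e' \<and> \<iota> (Inr (e,x)) = \<iota> (Inr (e',x'))"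
      then obtain e' x' where "e' \<in> F" "0 < x'" "x' < len e'" "\<iota> (Inr (e,x)) = \<iota> (Inr (e',x'))" by blast
      then have "e = e'" using inj_edge[of e x e' x'] that FE by auto
      then show False using that \<open>e' \<in> F\<close> by simp
    qed
    then show ?thesis using \<phi>N by (simp add: edge_fun_def)
  qed
  have locconst: "\<exists>U. open U \<and> x \<in> U \<and> (\<forall>y\<in>U. edge_fun \<phi> \<iota> e y = edge_fun \<phi> \<iota> e x)"
    if asm: "e \<in> Ed" "e \<notin> F" "0 < x" "x < len e" for e x
  proof -
    have "g (\<iota> (Inr (e,x))) \<noteq> c" using asm by (auto simp: F_def)
    then have gx: "\<bar>g (gam e x) - c\<bar> > 0" using gam_inner[OF asm(3,4)] by simp
    obtain d where d: "d > 0" "\<And>y. dist y x < d \<Longrightarrow> dist (g (gam e y)) (g (gam e x)) < \<bar>g (gam e x) - c\<bar>"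
      using gam_g_cont[OF asm(1)] gx unfolding continuous_on_iff by (metis UNIV_I)
    define U where "U = ball x d \<inter> {0<..<len e}"
    have "open U" by (simp add: U_def open_Int)
    moreover have "x \<in> U" using asm d by (simp add: U_def)
    moreover have "edge_fun \<phi> \<iota> e y = edge_fun \<phi> \<iota> e x" if "y \<in> U" for y
    proof -
      have y: "0 < y" "y < len e" "dist y x < d" using that by (auto simp: U_def dist_commute)
      have "ind (gam e y) = ind (gam e x)"
        using side[of "g (gam e y)" "g (gam e x)" c] d(2)[OF y(3)] by (auto simp: ind_def dist_real_def)
      then show ?thesis using ef_N[OF \<open>e \<in> Ed\<close> \<open>e \<notin> F\<close> y(1,2)] ef_N[OF \<open>e \<in> Ed\<close> \<open>e \<notin> F\<close> \<open>0 < x\<close> \<open>x < len e\<close>]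
        gam_inner[OF y(1,2)] gam_inner[OF \<open>0 < x\<close> \<open>x < len e\<close>] by simp
    qed
    ultimately show ?thesis by blast
  qed

  define \<epsilon>0 where "\<epsilon>0 = Min (insert 1 ((\<lambda>e. min (aa e) (len e - bb e)) ` F))"
  have \<epsilon>0: "\<epsilon>0 > 0" unfolding \<epsilon>0_def using fF FE ab_ord by (auto simp: Min_gr_iff)
  have \<epsilon>0le: "\<epsilon>0 \<le> min (aa e) (len e - bb e)" if "e \<in> F" for e
    unfolding \<epsilon>0_def using fF that by (intro Min_le) auto

  have classA: "class_A V Ed s t len \<iota> XX \<phi>"
    unfolding class_A_def
  proof (intro conjI ballI allI impI)
    show "continuous_on XX \<phi>" by (rule \<phi>_cont)
  next
    fix e k x assume e: "e \<in> Ed" and x: "x \<in> {0<..<len e}"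
    show "(deriv ^^ k) (edge_fun \<phi> \<iota> e) differentiable at x"
    proof (cases "e \<in> F")
      case True
      have "\<And>y. y \<in> {0<..<len e} \<Longrightarrow> edge_fun \<phi> \<iota> e y = h e y" using ef_F[OF True] by simp
      from local_smooth[OF open_greaterThanLessThan x this ck_h] show ?thesis .
    next
      case False
      obtain U where U: "open U" "x \<in> U" "\<forall>y\<in>U. edge_fun \<phi> \<iota> e y = edge_fun \<phi> \<iota> e x"
        using locconst[OF e False] x by auto
      have "\<And>y. y \<in> U \<Longrightarrow> edge_fun \<phi> \<iota> e y = (\<lambda>_. edge_fun \<phi> \<iota> e x) y" using U(3) by simp
      from local_smooth[OF U(1,2) this ck_const] show ?thesis .
    qed
  next
    show "\<exists>F. finite F \<and> F \<subseteq> Ed \<and> (\<forall>e\<in>Ed - F. \<forall>x\<in>{0<..<len e}. deriv (edge_fun \<phi> \<iota> e) x = 0)"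
    proof (intro exI[of _ F] conjI fF FE ballI)
      fix e x assume e: "e \<in> Ed - F" and x: "x \<in> {0<..<len e}"
      obtain U where U: "open U" "x \<in> U" "\<forall>y\<in>U. edge_fun \<phi> \<iota> e y = edge_fun \<phi> \<iota> e x"
        using locconst[of e x] e x by auto
      have "\<And>y. y \<in> U \<Longrightarrow> edge_fun \<phi> \<iota> e y = edge_fun \<phi> \<iota> e x" using U(3) by simp
      from local_const_deriv[OF U(1,2) this] show "deriv (edge_fun \<phi> \<iota> e) x = 0" .
    qed
  next
    fix v assume v: "v \<in> V"
    show "\<exists>\<epsilon>>0. \<forall>e\<in>Ed. \<forall>x\<in>{0<..<len e}. gdist Ed s t len (Inl v) (Inr (e, x)) < \<epsilon> \<longrightarrow>
            deriv (edge_fun \<phi> \<iota> e) x = 0"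
    proof (intro exI[of _ \<epsilon>0] conjI \<epsilon>0 ballI impI)
      fix e x assume e: "e \<in> Ed" and x: "x \<in> {0<..<len e}" and gd: "gdist Ed s t len (Inl v) (Inr (e, x)) < \<epsilon>0"
      show "deriv (edge_fun \<phi> \<iota> e) x = 0"
      proof (cases "e \<in> F")
        case False
        obtain U where U: "open U" "x \<in> U" "\<forall>y\<in>U. edge_fun \<phi> \<iota> e y = edge_fun \<phi> \<iota> e x"
          using locconst[OF e False] x by auto
        have "\<And>y. y \<in> U \<Longrightarrow> edge_fun \<phi> \<iota> e y = edge_fun \<phi> \<iota> e x" using U(3) by simp
        from local_const_deriv[OF U(1,2) this] show ?thesis .
      next
        case True
        have "min x (len e - x) < min (aa e) (len e - bb e)"
        proof -
          have "min x (len e - x) \<le> gdist Ed s t len (Inl v) (Inr (e, x))"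
            using gdist_V_edge_ge[OF v e] x by auto
          then show ?thesis using gd \<epsilon>0le[OF True] by linarith
        qed
        then consider "x < aa e" | "bb e < x" by (auto simp: min_def split: if_splits)
        then show ?thesis
        proof cases
          case 1
          have "\<And>y. y \<in> {0<..<aa e} \<Longrightarrow> edge_fun \<phi> \<iota> e y = L (s e)"
            using ab_ord[OF e] ef_F[OF True] h_lo[OF e] by auto
          moreover have "x \<in> {0<..<aa e}" using 1 x by auto
          ultimately show ?thesis using local_const_deriv[OF open_greaterThanLessThan] by blast
        next
          case 2
          have "\<And>y. y \<in> {bb e<..<len e} \<Longrightarrow> edge_fun \<phi> \<iota> e y = L (t e)"
            using ab_ord[OF e] ef_F[OF True] h_hi[OF e] by auto
          moreover have "x \<in> {bb e<..<len e}" using 2 x by auto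
          ultimately show ?thesis using local_const_deriv[OF open_greaterThanLessThan] by blast
        qed
      qed
    qed
  qed

  have FI: "y \<notin> Bdry" if "e \<in> F" "0 < x" "x < len e" "y = \<iota> (Inr (e,x))" for e x y
  proof -
    have "Inr (e,x) \<in> gpoints V Ed len - Inl ` Bd" using that FE by auto
    then have "y \<in> I" unfolding I_def using that(4) by blast
    then show ?thesis by (simp add: Bdry_def)
  qed
  have onE: "\<phi> y = 1" if "y \<in> E" for y
  proof -
    have "\<phi> y = ind y" using FI that EB by (intro \<phi>N) blast
    then show ?thesis using gE[OF that] c01 by (simp add: ind_def)
  qed
  have onEc: "\<phi> y = 0" if "y \<in> Ec" for y
  proof -
    have "\<phi> y = ind y" using FI that by (intro \<phi>N) (auto simp: Ec_def)
    then show ?thesis using gEc[OF that] c01 by (simp add: ind_def)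
  qed
  show ?thesis
    using classA onE onEc unfolding XX_def Ec_def Bdry_def I_def by blast
qed


end
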